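(* For every integer $t\ge1$, $C_5[E_{2t-1}]\rightarrow(K_{t,t},K_{t,t})^v$; consequently $F_v(K_{t,t},K_{t,t};3)\le 10t-5$.
   Context: All graphs are finite and simple. $E_s$ is the edgeless graph on $s$ vertices, $C_5$ the 5-cycle, $K_{t,t}$ the complete bipartite graph with parts of size $t$. The lexicographic product $G[H]$ has vertex set $V(G)\times V(H)$, with $\{(u_1,v_1),(u_2,v_2)\}$ an edge iff $\{u_1,u_2\}\in E(G)$, or $u_1=u_2$ and $\{v_1,v_2\}\in E(H)$. "A graph $F$ contains $H$" means $F$ has a (not necessarily induced) subgraph isomorphic to $H$. $G\rightarrow(H_1,H_2)^v$ means: for every partition $V(G)=X_1\cup X_2$ there is $i$ such that the subgraph induced by $X_i$ contains $H_i$. $F_v(H_1,H_2;k)$ is the minimum number of vertices of a $K_k$-free graph $G$ with $G\rightarrow(H_1,H_2)^v$. *)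

theory Defs
  imports Main
begin

type_synonym 'a graph = "'a set \<times> 'a set set"

definition verts :: "'a graph \<Rightarrow> 'a set" where "verts G = fst G"
definition edges :: "'a graph \<Rightarrow> 'a set set" where "edges G = snd G"

definition wf_graph :: "'a graph \<Rightarrow> bool" where
  "wf_graph G \<longleftrightarrow> finite (verts G) \<and>
     (\<forall>e\<in>edges G. \<exists>u v. e = {u, v} \<and> u \<noteq> v \<and> u \<in> verts G \<and> v \<in> verts G)"

definition contains :: "'a graph \<Rightarrow> 'b graph \<Rightarrow> bool" where
  "contains F H \<longleftrightarrow> (\<exists>f. inj_on f (verts H) \<and> f ` verts H \<subseteq> verts F \<and>
      (\<forall>u v. {u, v} \<in> edges H \<longrightarrow> {f u, f v} \<in> edges F))"

definition induced :: "'a graph \<Rightarrow> 'a set \<Rightarrow> 'a graph" where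
  "induced G X = (X \<inter> verts G, {e \<in> edges G. e \<subseteq> X})"

definition vertex_arrow :: "'a graph \<Rightarrow> 'b graph \<Rightarrow> 'c graph \<Rightarrow> bool" where
  "vertex_arrow G H1 H2 \<longleftrightarrow> (\<forall>X1 X2. X1 \<union> X2 = verts G \<longrightarrow> X1 \<inter> X2 = {} \<longrightarrow>
      contains (induced G X1) H1 \<or> contains (induced G X2) H2)"

definition complete_graph :: "nat \<Rightarrow> nat graph" where
  "complete_graph k = ({..<k}, {{i, j} | i j. i < k \<and> j < k \<and> i \<noteq> j})"

definition edgeless_graph :: "nat \<Rightarrow> nat graph" where
  "edgeless_graph s = ({..<s}, {})"

definition cycle5 :: "nat graph" where
  "cycle5 = ({..<5}, {{i, (i + 1) mod 5} | i. i < 5})"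

definition complete_bipartite :: "nat \<Rightarrow> (nat \<times> bool) graph" where
  "complete_bipartite t = ({..<t} \<times> UNIV,
      {{(i, False), (j, True)} | i j. i < t \<and> j < t})"

definition lex_product :: "'a graph \<Rightarrow> 'b graph \<Rightarrow> ('a \<times> 'b) graph" where
  "lex_product G H = (verts G \<times> verts H,
      {{(u1, v1), (u2, v2)} | u1 v1 u2 v2.
         u1 \<in> verts G \<and> u2 \<in> verts G \<and> v1 \<in> verts H \<and> v2 \<in> verts H \<and>
         ({u1, u2} \<in> edges G \<or> (u1 = u2 \<and> {v1, v2} \<in> edges H))})"

text \<open>F_v(H1,H2;k): least number of vertices of a K_k-free graph G with G \<rightarrow> (H1,H2)^v.
  Graphs are taken with vertex type nat (every finite graph is isomorphic to one).\<close>
definition Fv :: "'b graph \<Rightarrow> 'c graph \<Rightarrow> nat \<Rightarrow> nat" where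
  "Fv H1 H2 k = (LEAST n. \<exists>G :: nat graph. wf_graph G \<and> card (verts G) = n \<and>
      \<not> contains G (complete_graph k) \<and> vertex_arrow G H1 H2)"

end

theory Submission
  imports Defs "HOL-Library.Nat_Bijection"
begin

definition map_graph :: "('a \<Rightarrow> 'b) \<Rightarrow> 'a graph \<Rightarrow> 'b graph" where
  "map_graph h G = (h ` verts G, (\<lambda>e. h ` e) ` edges G)"

lemma verts_map[simp]: "verts (map_graph h G) = h ` verts G"
  by (simp add: map_graph_def verts_def)
lemma edges_map[simp]: "edges (map_graph h G) = (\<lambda>e. h ` e) ` edges G"
  by (simp add: map_graph_def edges_def)
lemma verts_induced[simp]: "verts (induced G X) = X \<inter> verts G"
  by (simp add: induced_def verts_def)
lemma edges_induced[simp]: "edges (induced G X) = {e \<in> edges G. e \<subseteq> X}"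
  by (simp add: induced_def edges_def)

lemma wf_map:
  assumes "inj h" "wf_graph G" shows "wf_graph (map_graph h G)"
proof -
  have "finite (h ` verts G)" using assms(2) by (simp add: wf_graph_def)
  moreover have "\<exists>u v. e' = {u, v} \<and> u \<noteq> v \<and> u \<in> h ` verts G \<and> v \<in> h ` verts G"
    if e'in: "e' \<in> (\<lambda>e. h ` e) ` edges G" for e'
  proof -
    obtain e where e: "e \<in> edges G" "e' = h ` e" using e'in by blast
    then obtain u v where "e = {u,v}" "u\<noteq>v" "u\<in>verts G" "v \<in> verts G"
      using assms(2) unfolding wf_graph_def by blast
    then show ?thesis using e assms(1)
      by (intro exI[of _ "h u"] exI[of _ "h v"]) (auto dest: injD)
  qed
  ultimately show ?thesis by (simp add: wf_graph_def)
qed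

lemma contains_map_back:
  assumes "inj h" "contains (map_graph h G) K" shows "contains G K"
proof -
  obtain f where f: "inj_on f (verts K)" "f ` verts K \<subseteq> h ` verts G"
    "\<forall>u v. {u,v} \<in> edges K \<longrightarrow> {f u, f v} \<in> (\<lambda>e. h ` e) ` edges G"
    using assms(2) unfolding contains_def edges_map verts_map by blast
  define g where "g = inv h \<circ> f"
  have fx: "h (g x) = f x \<and> g x \<in> verts G" if xK: "x \<in> verts K" for x
  proof -
    obtain a where "a \<in> verts G" "f x = h a" using f(2) xK by blast
    then show ?thesis using assms(1) by (simp add: g_def)
  qed
  have "inj_on g (verts K)"
  proof (rule inj_onI)
    fix x y assume x: "x \<in> verts K" and y: "y \<in> verts K" and gxy: "g x = g y"
    have "f x = h (g x)" using fx[OF x] by simp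
    also have "\<dots> = h (g y)" using gxy by simp
    also have "\<dots> = f y" using fx[OF y] by simp
    finally show "x = y" using f(1) x y by (simp add: inj_on_eq_iff)
  qed
  moreover have "g ` verts K \<subseteq> verts G" using fx by auto
  moreover have "{g u, g v} \<in> edges G" if uvK: "{u,v} \<in> edges K" for u v
  proof -
    obtain e where e: "e \<in> edges G" "{f u, f v} = h ` e" using f(3) uvK by blast
    have "inv h ` {f u, f v} = e" unfolding e(2) by (rule image_inv_f_f[OF assms(1)])
    then show ?thesis using e(1) by (simp add: g_def)
  qed
  ultimately show ?thesis unfolding contains_def by blast
qed

lemma contains_induced_map:
  assumes "inj h" "contains (induced G (h -` X \<inter> verts G)) H"
  shows "contains (induced (map_graph h G) X) H"
proof -
  obtain f where f1: "inj_on f (verts H)" and f2: "f ` verts H \<subseteq> verts (induced G (h -` X \<inter> verts G))"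
    and f3: "\<And>u v. {u,v} \<in> edges H \<Longrightarrow> {f u, f v} \<in> edges (induced G (h -` X \<inter> verts G))"
    using assms(2) unfolding contains_def by blast
  have "inj_on (h \<circ> f) (verts H)"
    using f1 assms(1) by (simp add: comp_inj_on inj_on_subset)
  moreover have "(h \<circ> f) ` verts H \<subseteq> verts (induced (map_graph h G) X)"
  proof
    fix y assume "y \<in> (h \<circ> f) ` verts H"
    then obtain x where x: "x \<in> verts H" "y = h (f x)" by auto
    have "f x \<in> h -` X \<inter> verts G" using f2 x(1) by auto
    then show "y \<in> verts (induced (map_graph h G) X)" using x(2) by simp
  qed
  moreover have "{(h \<circ> f) u, (h \<circ> f) v} \<in> edges (induced (map_graph h G) X)"
    if uvH: "{u,v} \<in> edges H" for u v
  proof -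
    have E: "{f u, f v} \<in> edges G" "{f u, f v} \<subseteq> h -` X \<inter> verts G" using f3[OF uvH] by simp_all
    have "h ` {f u, f v} \<in> (\<lambda>e. h ` e) ` edges G" using E(1) by (rule imageI)
    moreover have "h ` {f u, f v} \<subseteq> X" using E(2) by auto
    ultimately show ?thesis by simp
  qed
  ultimately show ?thesis unfolding contains_def by blast
qed

lemma arrow_map:
  assumes "inj h" "vertex_arrow G H1 H2" shows "vertex_arrow (map_graph h G) H1 H2"
  unfolding vertex_arrow_def
proof (intro allI impI)
  fix X1 X2 assume u: "X1 \<union> X2 = verts (map_graph h G)" and d: "X1 \<inter> X2 = {}"
  have "(h -` X1 \<inter> verts G) \<union> (h -` X2 \<inter> verts G) = verts G" using u by auto
  moreover have "(h -` X1 \<inter> verts G) \<inter> (h -` X2 \<inter> verts G) = {}" using d by auto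
  ultimately have "contains (induced G (h -` X1 \<inter> verts G)) H1 \<or> contains (induced G (h -` X2 \<inter> verts G)) H2"
    using assms(2) unfolding vertex_arrow_def by blast
  then show "contains (induced (map_graph h G) X1) H1 \<or> contains (induced (map_graph h G) X2) H2"
    using contains_induced_map[OF assms(1), of G X1 H1] contains_induced_map[OF assms(1), of G X2 H2] by blast
qed

lemma edges_cycle5: "{p,q} \<in> edges cycle5 \<longleftrightarrow> p < 5 \<and> q < 5 \<and> (q = (p+1) mod 5 \<or> p = (q+1) mod 5)"
  unfolding cycle5_def edges_def by (auto simp: doubleton_eq_iff)

abbreviation L :: "nat \<Rightarrow> (nat \<times> nat) graph" where
  "L n \<equiv> lex_product cycle5 (edgeless_graph n)"

lemma verts_L: "verts (L n) = {..<5} \<times> {..<n}"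
  by (simp add: lex_product_def verts_def cycle5_def edgeless_graph_def)

lemma edges_L_mem: "e \<in> edges (L n) \<longleftrightarrow> (\<exists>u1 v1 u2 v2. e = {(u1,v1),(u2,v2)} \<and> v1 < n \<and> v2 < n \<and> {u1,u2} \<in> edges cycle5)"
proof -
  have E: "edges (L n) = {{(u1, v1), (u2, v2)} | u1 v1 u2 v2.
         u1 \<in> {..<5} \<and> u2 \<in> {..<5} \<and> v1 \<in> {..<n} \<and> v2 \<in> {..<n} \<and>
         ({u1, u2} \<in> edges cycle5 \<or> (u1 = u2 \<and> {v1, v2} \<in> ({}::nat set set)))}"
    by (simp add: lex_product_def edges_def verts_def edgeless_graph_def cycle5_def)
  show ?thesis unfolding E using edges_cycle5 by blast
qed

lemma cyc_ne: "{p,q} \<in> edges cycle5 \<Longrightarrow> p \<noteq> q \<and> p < 5 \<and> q < 5"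
  unfolding edges_cycle5 by (auto simp: mod_Suc split: if_splits)

lemma adj5: "{p,q} \<in> edges cycle5 \<longleftrightarrow> p<5 \<and> q<5 \<and> (q = p+1 \<or> p = q+1 \<or> (p=4 \<and> q=0) \<or> (p=0 \<and> q=4))"
  unfolding edges_cycle5 by (auto simp: mod_Suc split: if_splits)

lemma L_edge_fst: assumes "{x,y} \<in> edges (L n)" shows "{fst x, fst y} \<in> edges cycle5"
proof -
  obtain u1 v1 u2 v2 where "{x,y} = {(u1,v1),(u2,v2)}" "{u1,u2} \<in> edges cycle5"
    using iffD1[OF edges_L_mem assms] by blast
  then have "(x = (u1,v1) \<and> y = (u2,v2)) \<or> (x = (u2,v2) \<and> y = (u1,v1))"
    by (simp add: doubleton_eq_iff)
  then show ?thesis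
  proof
    assume "x = (u1,v1) \<and> y = (u2,v2)" then show ?thesis using \<open>{u1,u2} \<in> edges cycle5\<close> by simp
  next
    assume "x = (u2,v2) \<and> y = (u1,v1)"
    moreover have "{u2,u1} = {u1,u2}" by (rule insert_commute)
    ultimately show ?thesis using \<open>{u1,u2} \<in> edges cycle5\<close> by (simp only: fst_conv)
  qed
qed

lemma K3_edge: "i<3 \<Longrightarrow> j<3 \<Longrightarrow> i\<noteq>j \<Longrightarrow> {i,j} \<in> edges (complete_graph 3)"
  by (auto simp: complete_graph_def edges_def)

lemma no_tri: "{p,q} \<in> edges cycle5 \<Longrightarrow> {q,r} \<in> edges cycle5 \<Longrightarrow> {p,r} \<in> edges cycle5 \<Longrightarrow> False"
  unfolding adj5 by linarith

lemma L_K3_free: "\<not> contains (L n) (complete_graph 3)"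
proof
  assume "contains (L n) (complete_graph 3)"
  then obtain f where f: "\<And>u v. {u,v} \<in> edges (complete_graph 3) \<Longrightarrow> {f u, f v} \<in> edges (L n)"
    unfolding contains_def by blast
  have e1: "{f 0, f 1} \<in> edges (L n)" by (rule f) (rule K3_edge; simp)
  have e2: "{f 1, f 2} \<in> edges (L n)" by (rule f) (rule K3_edge; simp)
  have e3: "{f 0, f 2} \<in> edges (L n)" by (rule f) (rule K3_edge; simp)
  show False by (rule no_tri[OF L_edge_fst[OF e1] L_edge_fst[OF e2] L_edge_fst[OF e3]])
qed

lemma wf_L: "wf_graph (L n)"
  unfolding wf_graph_def
proof
  show "finite (verts (L n))" by (simp add: verts_L)
  show "\<forall>e\<in>edges (L n). \<exists>u v. e = {u, v} \<and> u \<noteq> v \<and> u \<in> verts (L n) \<and> v \<in> verts (L n)"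
  proof
    fix e assume eL: "e \<in> edges (L n)"
    obtain u1 v1 u2 v2 where uv: "e = {(u1,v1),(u2,v2)}" "v1 < n" "v2 < n" "{u1,u2} \<in> edges cycle5"
      using iffD1[OF edges_L_mem eL] by blast
    have c: "u1 \<noteq> u2" "u1 < 5" "u2 < 5" using cyc_ne[OF uv(4)] by auto
    show "\<exists>u v. e = {u, v} \<and> u \<noteq> v \<and> u \<in> verts (L n) \<and> v \<in> verts (L n)"
      by (rule exI[of _ "(u1,v1)"], rule exI[of _ "(u2,v2)"]) (use uv c in \<open>simp add: verts_L\<close>)
  qed
qed

lemma card_L: "card (verts (L n)) = 5 * n"
  by (simp add: verts_L card_cartesian_product)

lemma inj_seg: assumes "t \<le> card A" "finite A"
  obtains a where "inj_on a {..<t}" "a ` {..<t} \<subseteq> A"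
proof -
  obtain T where T: "T \<subseteq> A" "card T = t" "finite T" using obtain_subset_with_card_n[OF assms(1)] by blast
  obtain h where "bij_betw h {0..<card T} T" using ex_bij_betw_nat_finite[OF T(3)] by blast
  then have "inj_on h {..<t}" "h ` {..<t} \<subseteq> A" using T by (auto simp: bij_betw_def atLeast0LessThan)
  then show ?thesis using that by blast
qed

lemma kbip:
  assumes ij: "{i,j} \<in> edges cycle5" and a: "inj_on \<alpha> {..<t}" and b: "inj_on \<beta> {..<t}"
    and aX: "\<And>k. k<t \<Longrightarrow> \<alpha> k < n \<and> (i, \<alpha> k) \<in> X" and bX: "\<And>k. k<t \<Longrightarrow> \<beta> k < n \<and> (j, \<beta> k) \<in> X"
  shows "contains (induced (L n) X) (complete_bipartite t)"
proof -
  have ij2: "i \<noteq> j" "i < 5" "j < 5" using cyc_ne[OF ij] by auto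
  define f where "f = (\<lambda>(k, c). if c then (j, \<beta> k) else (i, \<alpha> k))"
  have fT: "f (k, True) = (j, \<beta> k)" and fF: "f (k, False) = (i, \<alpha> k)" for k by (simp_all add: f_def)
  have vK: "verts (complete_bipartite t) = {..<t} \<times> UNIV" by (simp add: complete_bipartite_def verts_def)
  have "inj_on f ({..<t} \<times> UNIV)"
  proof (rule inj_onI)
    fix x y assume x: "x \<in> {..<t} \<times> (UNIV::bool set)" and y: "y \<in> {..<t} \<times> (UNIV::bool set)" and e: "f x = f y"
    obtain k c where xk: "x = (k,c)" "k < t" using x by auto
    obtain l d where yl: "y = (l,d)" "l < t" using y by auto
    show "x = y"
    proof (cases c; cases d)
      assume "c" "d" then show ?thesis using e xk yl b by (simp add: fT inj_on_eq_iff)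
    next
      assume "c" "\<not>d" then show ?thesis using e xk yl ij2 by (simp add: fT fF)
    next
      assume "\<not>c" "d" then show ?thesis using e xk yl ij2 by (simp add: fT fF)
    next
      assume "\<not>c" "\<not>d" then show ?thesis using e xk yl a by (simp add: fF inj_on_eq_iff)
    qed
  qed
  moreover have "f ` ({..<t} \<times> UNIV) \<subseteq> verts (induced (L n) X)"
  proof
    fix z assume "z \<in> f ` ({..<t} \<times> UNIV)"
    then obtain k c where z: "z = f (k,c)" "k < t" by auto
    show "z \<in> verts (induced (L n) X)"
    proof (cases c)
      case True then show ?thesis using z aX[of k] bX[of k] ij2 by (simp add: fT verts_L)
    next
      case False then show ?thesis using z aX[of k] bX[of k] ij2 by (simp add: fF verts_L)
    qed
  qed
  moreover have "{f u, f v} \<in> edges (induced (L n) X)" if uv: "{u,v} \<in> edges (complete_bipartite t)" for u v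
  proof -
    obtain k l where kl: "k<t" "l<t" "{u,v} = {(k,False),(l,True)}"
      using uv unfolding complete_bipartite_def edges_def by auto
    have "(u = (k,False) \<and> v = (l,True)) \<or> (u = (l,True) \<and> v = (k,False))"
      using kl(3) by (simp add: doubleton_eq_iff)
    then have fe: "{f u, f v} = {(i, \<alpha> k), (j, \<beta> l)}"
    proof
      assume "u = (k,False) \<and> v = (l,True)" then show ?thesis by (simp add: fT fF)
    next
      assume "u = (l,True) \<and> v = (k,False)" then show ?thesis by (simp add: fT fF insert_commute)
    qed
    have "{(i, \<alpha> k), (j, \<beta> l)} \<in> edges (L n)"
      unfolding edges_L_mem using aX[OF kl(1)] bX[OF kl(2)] ij by blast
    moreover have "{(i, \<alpha> k), (j, \<beta> l)} \<subseteq> X" using aX[OF kl(1)] bX[OF kl(2)] by simp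
    ultimately show ?thesis unfolding fe by simp
  qed
  ultimately show ?thesis unfolding contains_def vK by blast
qed

lemma five_cycle_bool: "\<exists>i<5::nat. (c i::bool) = c ((i+1) mod 5)"
proof (rule ccontr)
  assume "\<not> ?thesis"
  then have h: "\<And>i. i<5 \<Longrightarrow> c i \<noteq> c ((i+1) mod 5)" by blast
  have a: "c 0 \<noteq> c 1" using h[of 0] by simp
  have b: "c 1 \<noteq> c 2" using h[of 1] by (simp add: numeral_2_eq_2)
  have d: "c 2 \<noteq> c 3" using h[of 2] by simp
  have e: "c 3 \<noteq> c 4" using h[of 3] by simp
  have f: "c 4 \<noteq> c 0" using h[of 4] by simp
  show False using a b d e f by blast
qed

lemma L_arrow:
  assumes "t \<ge> 1"
  shows "vertex_arrow (L (2*t-1)) (complete_bipartite t) (complete_bipartite t)"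
  unfolding vertex_arrow_def
proof (intro allI impI)
  fix X1 X2 assume u: "X1 \<union> X2 = verts (L (2*t-1))" and d: "X1 \<inter> X2 = {}"
  define n where "n = 2*t-1"
  define A where "A X i = {v. v < n \<and> (i,v) \<in> X}" for X and i :: nat
  have fin: "finite (A X i)" for X i by (simp add: A_def)
  have sum: "card (A X1 i) + card (A X2 i) = n" if "i < 5" for i
  proof -
    have "A X1 i \<union> A X2 i = {..<n}" using u that by (auto simp: A_def verts_L n_def)
    moreover have "A X1 i \<inter> A X2 i = {}" using d by (auto simp: A_def)
    ultimately show ?thesis using card_Un_disjoint[OF fin fin, of X1 i X2 i] by simp
  qed
  define c where "c i = (t \<le> card (A X1 i))" for i
  have c2: "t \<le> card (A X2 i)" if "i<5" "\<not> c i" for i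
    using sum[OF that(1)] that(2) unfolding c_def n_def by linarith
  obtain i where i: "i < 5" "c i = c ((i+1) mod 5)" using five_cycle_bool by blast
  define j where "j = (i+1) mod 5"
  have ij: "{i,j} \<in> edges cycle5" unfolding edges_cycle5 j_def using i by auto
  have j5: "j < 5" unfolding j_def by auto
  have key: "contains (induced (L n) X) (complete_bipartite t)"
    if hX: "t \<le> card (A X i)" "t \<le> card (A X j)" for X
  proof -
    obtain \<alpha> where a: "inj_on \<alpha> {..<t}" "\<alpha> ` {..<t} \<subseteq> A X i" using inj_seg[OF hX(1) fin] by blast
    obtain \<beta> where b: "inj_on \<beta> {..<t}" "\<beta> ` {..<t} \<subseteq> A X j" using inj_seg[OF hX(2) fin] by blast
    show ?thesis
      by (rule kbip[OF ij a(1) b(1)]) (use a(2) b(2) in \<open>auto simp: A_def\<close>)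
  qed
  show "contains (induced (L (2*t-1)) X1) (complete_bipartite t) \<or> contains (induced (L (2*t-1)) X2) (complete_bipartite t)"
  proof (cases "c i")
    case True
    then have "c j" using i j_def by simp
    then show ?thesis using key[of X1] True unfolding c_def n_def by blast
  next
    case False
    then have "\<not> c j" using i j_def by simp
    then show ?thesis using key[of X2] False c2 i(1) j5 unfolding n_def by blast
  qed
qed

theorem mainTheorem8:
  fixes t :: nat
  assumes "t \<ge> 1"
  shows "vertex_arrow (lex_product cycle5 (edgeless_graph (2 * t - 1)))
           (complete_bipartite t) (complete_bipartite t)
         \<and> Fv (complete_bipartite t) (complete_bipartite t) 3 \<le> 10 * t - 5"
proof
  show A: "vertex_arrow (L (2*t-1)) (complete_bipartite t) (complete_bipartite t)"
    using L_arrow[OF assms] .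
  define G where "G = map_graph prod_encode (L (2*t-1))"
  have inj: "inj prod_encode" by (rule inj_prod_encode)
  have "wf_graph G" unfolding G_def by (rule wf_map[OF inj wf_L])
  moreover have "card (verts G) = 10 * t - 5"
  proof -
    have "card (verts G) = card (verts (L (2*t-1)))"
      unfolding G_def verts_map by (rule card_image[OF inj_on_subset[OF inj subset_UNIV]])
    also have "\<dots> = 5 * (2*t-1)" by (rule card_L)
    also have "\<dots> = 10 * t - 5" by simp
    finally show ?thesis .
  qed
  moreover have "\<not> contains G (complete_graph 3)"
    unfolding G_def using contains_map_back[OF inj, of "L (2*t-1)" "complete_graph 3"] L_K3_free[of "2*t-1"] by blast
  moreover have "vertex_arrow G (complete_bipartite t) (complete_bipartite t)"
    unfolding G_def by (rule arrow_map[OF inj A])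
  ultimately have ex: "\<exists>G :: nat graph. wf_graph G \<and> card (verts G) = 10 * t - 5 \<and>
      \<not> contains G (complete_graph 3) \<and> vertex_arrow G (complete_bipartite t) (complete_bipartite t)"
    by blast
  then show "Fv (complete_bipartite t) (complete_bipartite t) 3 \<le> 10 * t - 5"
    unfolding Fv_def by (rule Least_le)
qed

end
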